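(* If $\sigma'$ is not lower bounded, the optimal policy cannot be identified from the transitions and the comparison probabilities; in particular, for the link function $\sigma(x)=\tfrac12(1+\mathrm{sign}(x))$ there exist an episodic MDP (with horizon $H=2$, known transitions) and two reward functions $r^{(1)},r^{(2)}$ such that $\sigma(r^{(1)}(\tau)-r^{(1)}(\tau'))=\sigma(r^{(2)}(\tau)-r^{(2)}(\tau'))$ for all pairs of trajectories $\tau,\tau'$, while the optimal policies with respect to $r^{(1)}$ and $r^{(2)}$ differ (each is suboptimal for the other reward).
   Context: Episodic MDP with trajectories $\tau$; a comparison oracle with link function $\sigma$ and reward $r$ returns $\tau\succ\tau'$ with probability $\sigma(r(\tau)-r(\tau'))$. A policy is optimal for $r$ if it maximizes $\mathbb{E}_{\tau\sim\pi}[r(\tau)]$. *)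

theory Defs
  imports "HOL-Probability.Probability"
begin

text \<open>Episodic MDP with states and actions encoded as natural numbers, restricted to
finite carriers S (states) and A (actions). A trajectory of horizon H is the list
[(s_0,a_0),...,(s_{H-1},a_{H-1})]. Policies are history-dependent and randomized:
pol hist s is the action distribution given the history so far and current state.
Transitions P h s a may depend on the step h.\<close>

type_synonym traj = "(nat \<times> nat) list"
type_synonym kernel = "nat \<Rightarrow> nat \<Rightarrow> nat \<Rightarrow> nat pmf"
type_synonym policy = "traj \<Rightarrow> nat \<Rightarrow> nat pmf"

definition valid_mdp :: "nat set \<Rightarrow> nat set \<Rightarrow> nat pmf \<Rightarrow> kernel \<Rightarrow> bool" where
  "valid_mdp S A mu0 P \<longleftrightarrow> finite S \<and> S \<noteq> {} \<and> finite A \<and> A \<noteq> {} \<and>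
     set_pmf mu0 \<subseteq> S \<and> (\<forall>h s a. s \<in> S \<longrightarrow> a \<in> A \<longrightarrow> set_pmf (P h s a) \<subseteq> S)"

definition valid_policy :: "nat set \<Rightarrow> nat set \<Rightarrow> policy \<Rightarrow> bool" where
  "valid_policy S A pol \<longleftrightarrow> (\<forall>hist s. s \<in> S \<longrightarrow> set_pmf (pol hist s) \<subseteq> A)"

fun run :: "kernel \<Rightarrow> policy \<Rightarrow> traj \<Rightarrow> nat \<Rightarrow> nat \<Rightarrow> traj pmf" where
  "run P pol hist 0 s = return_pmf hist"
| "run P pol hist (Suc k) s =
     bind_pmf (pol hist s) (\<lambda>a. bind_pmf (P (length hist) s a)
       (\<lambda>s'. run P pol (hist @ [(s, a)]) k s'))"

definition traj_dist :: "nat pmf \<Rightarrow> kernel \<Rightarrow> policy \<Rightarrow> nat \<Rightarrow> traj pmf" where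
  "traj_dist mu0 P pol H = bind_pmf mu0 (\<lambda>s. run P pol [] H s)"

definition policy_value :: "nat pmf \<Rightarrow> kernel \<Rightarrow> nat \<Rightarrow> (traj \<Rightarrow> real) \<Rightarrow> policy \<Rightarrow> real" where
  "policy_value mu0 P H r pol = measure_pmf.expectation (traj_dist mu0 P pol H) r"

definition optimal_policy ::
  "nat set \<Rightarrow> nat set \<Rightarrow> nat pmf \<Rightarrow> kernel \<Rightarrow> nat \<Rightarrow> (traj \<Rightarrow> real) \<Rightarrow> policy \<Rightarrow> bool" where
  "optimal_policy S A mu0 P H r pol \<longleftrightarrow> valid_policy S A pol \<and>
     (\<forall>pol'. valid_policy S A pol' \<longrightarrow> policy_value mu0 P H r pol' \<le> policy_value mu0 P H r pol)"

definition is_traj :: "nat set \<Rightarrow> nat set \<Rightarrow> nat \<Rightarrow> traj \<Rightarrow> bool" where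
  "is_traj S A H tau \<longleftrightarrow> length tau = H \<and> (\<forall>(s, a) \<in> set tau. s \<in> S \<and> a \<in> A)"

definition sign_link :: "real \<Rightarrow> real" where
  "sign_link x = (1 + sgn x) / 2"

end

theory Submission
  imports Defs
begin

definition PP :: kernel where "PP h s a = (if a = 1 then pmf_of_set {0,2} else return_pmf 1)"
definition ff :: "real \<Rightarrow> real \<Rightarrow> real \<Rightarrow> nat \<Rightarrow> real" where
  "ff c0 c1 c2 s = (if s = 0 then c0 else if s = 1 then c1 else c2)"

lemma map_traj: "map_pmf (\<lambda>t. fst (t!1)) (traj_dist (return_pmf 0) PP pol 2) = bind_pmf (pol [] 0) (PP 0 0)"
  by (simp add: traj_dist_def numeral_2_eq_2 map_bind_pmf bind_return_pmf map_pmf_def[symmetric] bind_assoc_pmf)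

lemma value_eq:
  assumes "valid_policy {0,1,2} {0,1} pol"
  shows "policy_value (return_pmf 0) PP 2 (\<lambda>t. ff c0 c1 c2 (fst (t!1))) pol
     = (1 - pmf (pol [] 0) 1) * c1 + pmf (pol [] 0) 1 * (c0 + c2) / 2"
proof -
  let ?Q = "pol [] 0"
  have sQ: "set_pmf ?Q \<subseteq> {0,1}" using assms unfolding valid_policy_def by auto
  have q: "pmf ?Q 0 + pmf ?Q 1 = 1" using sum_pmf_eq_1[OF _ sQ] by simp
  have pv: "policy_value (return_pmf 0) PP 2 (\<lambda>t. ff c0 c1 c2 (fst (t!1))) pol
     = measure_pmf.expectation (bind_pmf ?Q (PP 0 0)) (ff c0 c1 c2)"
    unfolding policy_value_def map_traj[symmetric] by simp
  have sD: "set_pmf (bind_pmf ?Q (PP 0 0)) \<subseteq> {0,1,2}" using sQ by (auto simp: PP_def split: if_splits)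
  have pD: "pmf (bind_pmf ?Q (PP 0 0)) s = pmf (PP 0 0 0) s * pmf ?Q 0 + pmf (PP 0 0 1) s * pmf ?Q 1" for s
    unfolding pmf_bind
    by (subst integral_measure_pmf_real[where A="{0,1}"]) (use sQ in auto)
  have "measure_pmf.expectation (bind_pmf ?Q (PP 0 0)) (ff c0 c1 c2)
     = (\<Sum>s\<in>{0,1,2}. ff c0 c1 c2 s * pmf (bind_pmf ?Q (PP 0 0)) s)"
    by (rule integral_measure_pmf_real) (use sD in auto)
  also have "\<dots> = (1 - pmf ?Q 1) * c1 + pmf ?Q 1 * (c0 + c2) / 2"
  proof -
    have q': "pmf ?Q 0 = 1 - pmf ?Q (Suc 0)" using q by simp
    show ?thesis by (simp add: pD PP_def ff_def q' algebra_simps add_divide_distrib)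
  qed
  finally show ?thesis using pv by simp
qed

lemma sgn_same:
  assumes "x \<in> {0,1,2::nat}" "y \<in> {0,1,2::nat}"
  shows "sign_link (ff 0 1 3 x - ff 0 1 3 y) = sign_link (ff 0 2 3 x - ff 0 2 3 y)"
  using assms by (auto simp: ff_def sign_link_def)

lemma traj_mem: "is_traj {0,1,2} {0,1} 2 t \<Longrightarrow> fst (t!1) \<in> {0,1,2::nat}"
  unfolding is_traj_def by (metis (no_types, lifting) case_prodE nth_mem one_less_numeral_iff prod.sel(1) semiring_norm(76))

lemma pmf_le: "pmf M x \<le> 1" by (rule pmf_le_1)

theorem lemma2:
  shows "\<exists>(S::nat set) (A::nat set) (mu0::nat pmf) (P::kernel) (r1::traj \<Rightarrow> real) (r2::traj \<Rightarrow> real).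
    valid_mdp S A mu0 P \<and>
    (\<forall>tau tau'. is_traj S A 2 tau \<longrightarrow> is_traj S A 2 tau' \<longrightarrow>
        sign_link (r1 tau - r1 tau') = sign_link (r2 tau - r2 tau')) \<and>
    (\<exists>pol. optimal_policy S A mu0 P 2 r1 pol) \<and>
    (\<exists>pol. optimal_policy S A mu0 P 2 r2 pol) \<and>
    (\<forall>pol. optimal_policy S A mu0 P 2 r1 pol \<longrightarrow> \<not> optimal_policy S A mu0 P 2 r2 pol) \<and>
    (\<forall>pol. optimal_policy S A mu0 P 2 r2 pol \<longrightarrow> \<not> optimal_policy S A mu0 P 2 r1 pol)"
proof -
  define S :: "nat set" where "S = {0,1,2}"
  define A :: "nat set" where "A = {0,1}"
  define r1 :: "traj \<Rightarrow> real" where "r1 = (\<lambda>t. ff 0 1 3 (fst (t!1)))"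
  define r2 :: "traj \<Rightarrow> real" where "r2 = (\<lambda>t. ff 0 2 3 (fst (t!1)))"
  have v1: "policy_value (return_pmf 0) PP 2 r1 pol = 1 + pmf (pol [] 0) 1 / 2"
    if "valid_policy S A pol" for pol
    using value_eq[of pol 0 1 3] that unfolding S_def A_def r1_def by (simp add: algebra_simps)
  have v2: "policy_value (return_pmf 0) PP 2 r2 pol = 2 - pmf (pol [] 0) 1 / 2"
    if "valid_policy S A pol" for pol
    using value_eq[of pol 0 2 3] that unfolding S_def A_def r2_def by (simp add: algebra_simps)
  define p1 :: policy where "p1 = (\<lambda>_ _. return_pmf 1)"
  define p0 :: policy where "p0 = (\<lambda>_ _. return_pmf 0)"
  have vp1: "valid_policy S A p1" and vp0: "valid_policy S A p0"
    unfolding valid_policy_def p1_def p0_def S_def A_def by auto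
  have mdp: "valid_mdp S A (return_pmf 0) PP"
    unfolding valid_mdp_def S_def A_def PP_def by auto
  have o1: "optimal_policy S A (return_pmf 0) PP 2 r1 p1"
    unfolding optimal_policy_def using vp1 v1 by (auto simp: p1_def pmf_le_1)
  have o2: "optimal_policy S A (return_pmf 0) PP 2 r2 p0"
    unfolding optimal_policy_def using vp0 v2 by (auto simp: p0_def)
  have both: False if "optimal_policy S A (return_pmf 0) PP 2 r1 pol"
      "optimal_policy S A (return_pmf 0) PP 2 r2 pol" for pol
  proof -
    have vp: "valid_policy S A pol" using that unfolding optimal_policy_def by auto
    have "policy_value (return_pmf 0) PP 2 r1 p1 \<le> policy_value (return_pmf 0) PP 2 r1 pol"
      using that(1) vp1 unfolding optimal_policy_def by auto
    moreover have "policy_value (return_pmf 0) PP 2 r2 p0 \<le> policy_value (return_pmf 0) PP 2 r2 pol"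
      using that(2) vp0 unfolding optimal_policy_def by auto
    ultimately show False using v1[OF vp] v2[OF vp] v1[OF vp1] v2[OF vp0] by (simp add: p1_def p0_def)
  qed
  have sg: "\<forall>tau tau'. is_traj S A 2 tau \<longrightarrow> is_traj S A 2 tau' \<longrightarrow>
        sign_link (r1 tau - r1 tau') = sign_link (r2 tau - r2 tau')"
    unfolding r1_def r2_def S_def A_def using sgn_same traj_mem by blast
  show ?thesis using mdp sg o1 o2 both by blast
qed

end
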